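(* Let $\gamma\in(0,1)$ and let $\alpha_0,\alpha_1,\dots\in[0,1]$. Define $\delta^1=\alpha_0$, $\lambda^1=\alpha_0^2$ and, for $n>1$, $$\delta^n=\alpha_{n-1}+\big(1-(1-\gamma)\alpha_{n-1}\big)\delta^{n-1},\qquad \lambda^n=\alpha_{n-1}^2+\big(1-(1-\gamma)\alpha_{n-1}\big)^2\lambda^{n-1}.$$ Then for all $n\ge1$, $\delta^n\le \frac{1}{1-\gamma}$ and $\lambda^n\le\frac{1}{\gamma(1-\gamma)}$. *)

theory Defs
  imports Complex_Main
begin

(* delta_aux g a m = \<delta>^(m+1), lambda_aux g a m = \<lambda>^(m+1) *)
primrec delta_aux :: "real \<Rightarrow> (nat \<Rightarrow> real) \<Rightarrow> nat \<Rightarrow> real" where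
  "delta_aux g a 0 = a 0"
| "delta_aux g a (Suc m) = a (Suc m) + (1 - (1 - g) * a (Suc m)) * delta_aux g a m"

primrec lambda_aux :: "real \<Rightarrow> (nat \<Rightarrow> real) \<Rightarrow> nat \<Rightarrow> real" where
  "lambda_aux g a 0 = (a 0)\<^sup>2"
| "lambda_aux g a (Suc m) = (a (Suc m))\<^sup>2 + (1 - (1 - g) * a (Suc m))\<^sup>2 * lambda_aux g a m"

definition delta :: "real \<Rightarrow> (nat \<Rightarrow> real) \<Rightarrow> nat \<Rightarrow> real" where
  "delta g a n = delta_aux g a (n - 1)"

definition lambda :: "real \<Rightarrow> (nat \<Rightarrow> real) \<Rightarrow> nat \<Rightarrow> real" where
  "lambda g a n = lambda_aux g a (n - 1)"

end

theory Submission
  imports Defs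
begin

lemma dstep:
  fixes g a d :: real
  assumes "0 < g" "g < 1" "0 \<le> a" "a \<le> 1" "d \<le> 1/(1-g)"
  shows "a + (1 - (1-g)*a) * d \<le> 1/(1-g)"
proof -
  have c: "0 \<le> 1 - (1-g)*a" using assms by (smt (verit) mult_le_one)
  have "(1 - (1-g)*a) * d \<le> (1 - (1-g)*a) * (1/(1-g))" using mult_left_mono[OF assms(5) c] .
  also have "\<dots> = 1/(1-g) - a" using assms by (simp add: field_simps)
  finally show ?thesis by simp
qed

lemma lstep:
  fixes g a l :: real
  assumes "0 < g" "g < 1" "0 \<le> a" "a \<le> 1" "l \<le> 1/(g*(1-g))"
  shows "a^2 + (1 - (1-g)*a)^2 * l \<le> 1/(g*(1-g))"
proof -
  have "(1 - (1-g)*a)^2 * l \<le> (1 - (1-g)*a)^2 * (1/(g*(1-g)))"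
    using mult_left_mono[OF assms(5)] by simp
  moreover have "a^2 + (1 - (1-g)*a)^2 * (1/(g*(1-g))) \<le> 1/(g*(1-g))"
  proof -
    have gp: "g*(1-g) > 0" using assms by simp
    have "a^2 * (g*(1-g)) + (1 - (1-g)*a)^2 \<le> 1"
    proof -
      have "a^2 * (g*(1-g)) + (1 - (1-g)*a)^2 - 1 = (1-g)*a*(a - 2)"
        by (simp add: algebra_simps power2_eq_square)
      also have "\<dots> \<le> 0" using assms by (simp add: mult_nonneg_nonpos)
      finally show ?thesis by simp
    qed
    then have "(a^2 * (g*(1-g)) + (1 - (1-g)*a)^2) / (g*(1-g)) \<le> 1/(g*(1-g))"
      using gp by (simp add: divide_right_mono)
    also have "(a^2 * (g*(1-g)) + (1 - (1-g)*a)^2) / (g*(1-g)) = a^2 + (1 - (1-g)*a)^2 * (1/(g*(1-g)))"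
      using gp by (simp add: add_divide_distrib del: mult_eq_0_iff)
    finally show ?thesis .
  qed
  ultimately show ?thesis by linarith
qed

theorem proposition2:
  fixes \<gamma> :: real and \<alpha> :: "nat \<Rightarrow> real"
  assumes "0 < \<gamma>" "\<gamma> < 1"
    and "\<And>k. 0 \<le> \<alpha> k \<and> \<alpha> k \<le> 1"
  shows "\<forall>n\<ge>1. delta \<gamma> \<alpha> n \<le> 1 / (1 - \<gamma>) \<and> lambda \<gamma> \<alpha> n \<le> 1 / (\<gamma> * (1 - \<gamma>))"
proof -
  have a: "0 \<le> \<alpha> k" "\<alpha> k \<le> 1" for k using assms(3) by auto
  have d: "delta_aux \<gamma> \<alpha> m \<le> 1/(1-\<gamma>)" for m
  proof (induction m)
    case 0
    have "1 \<le> 1/(1-\<gamma>)" using assms by (simp add: field_simps)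
    then show ?case using a[of 0] by simp
  next
    case (Suc m) then show ?case using dstep[OF assms(1,2) a] by simp
  qed
  have l: "lambda_aux \<gamma> \<alpha> m \<le> 1/(\<gamma>*(1-\<gamma>))" for m
  proof (induction m)
    case 0
    have g: "\<gamma>*(1-\<gamma>) \<le> 1" using assms by (smt (verit) mult_le_one)
    have "1 \<le> 1/(\<gamma>*(1-\<gamma>))" using assms g by (simp add: field_simps)
    moreover have "(\<alpha> 0)^2 \<le> 1" using a[of 0] by (simp add: power_le_one)
    ultimately show ?case by simp
  next
    case (Suc m) then show ?case using lstep[OF assms(1,2) a] by simp
  qed
  show ?thesis using d l by (simp add: delta_def lambda_def)
qed

end
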